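(* Let $D=(V,E)$ be a finite connected graph with weights $\mathbf c_e\ge1$, and let $H$ be a positive height function on $D$. Let $h$ be drawn randomly among height functions with $|h|=H$, with probabilities proportional to $W(h)$ (resp. among those additionally satisfying $\mathrm{sign}(h)=+1$ on a given $S\subset V$). Let $B$ be an independent Bernoulli percolation with parameters $p_e=1-1/\mathbf c_e$ and $\omega$ the percolation defined from $(h,B)$ as below. Then: (1) the marginal law of $\omega$ is ${\sf P}^D_{\rm FK}[\,\cdot\mid E_{\rm fix}(H)\subset\omega]$ (resp. ${\sf P}^{D,+}_{\rm FK}[\,\cdot\mid E_{\rm fix}(H)\subset\omega]$, wired on $S$); (2) given $H$ and $\omega$, the conditional law of $\mathrm{sign}(h)$ is constant on each connected component of $(V,\omega)$, with independent fair coin flips on different components (resp. except that the sign is $+1$ on components intersecting $S$).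
   Context: $\mathbb Z_{\rm odd}=2\mathbb Z+1$. A height function on $D$ is $h:V\to\mathbb Z_{\rm odd}$ with $|h(v)-h(w)|\le2$ for all edges $\langle v,w\rangle$; it is positive if $h>0$. Weight: $W(h)=\prod_{e=\langle v,w\rangle\in E}\mathbf c_e^{\mathbb 1\{h(v)=h(w)\}}$. Fixed-sign edges: $E_{\rm fix}(H)=\{\langle v,w\rangle\in E:\max(H(v),H(w))\ge3\}$. Percolations: $B\in\{0,1\}^E$ has independent coordinates with $B_e=1$ with probability $p_e=1-1/\mathbf c_e$, independent of $h$; $\omega_{\langle v,w\rangle}=1$ if $\max(|h(v)|,|h(w)|)\ge3$, $\omega_{\langle v,w\rangle}=B_{\langle v,w\rangle}$ if $h(v)=h(w)\in\{\pm1\}$, and $\omega_{\langle v,w\rangle}=0$ if $\{h(v),h(w)\}=\{-1,1\}$. FK-Ising: ${\sf P}^D_{\rm FK}[\varpi]\propto 2^{c(\varpi)}\prod_{e}p_e^{\mathbb 1\{e\in\varpi\}}(1-p_e)^{\mathbb 1\{e\notin\varpi\}}$ for $\varpi\subset E$, with $c(\varpi)$ the number of connected components of $(V,\varpi)$; ${\sf P}^{D,+}_{\rm FK}$ (wired on $S$) is the same model on the graph where all vertices of $S$ are identified. *)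

theory Defs
  imports Complex_Main "HOL-Library.FuncSet"
begin

definition graph :: "'v set \<Rightarrow> 'v set set \<Rightarrow> bool" where
  "graph V E \<longleftrightarrow> finite V \<and> (\<forall>e\<in>E. e \<subseteq> V \<and> card e = 2)"

definition adj :: "'v set set \<Rightarrow> ('v \<times> 'v) set" where
  "adj F = {(v,w). \<exists>e\<in>F. v \<in> e \<and> w \<in> e}"

definition graph_connected :: "'v set \<Rightarrow> 'v set set \<Rightarrow> bool" where
  "graph_connected V E \<longleftrightarrow> (\<forall>v\<in>V. \<forall>w\<in>V. (v,w) \<in> (adj E)\<^sup>*)"

definition components :: "'v set \<Rightarrow> 'v set set \<Rightarrow> 'v set set" where
  "components V F = V // ((adj F)\<^sup>*)"

text \<open>Connected components of the graph (V, F) in which all vertices of S are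
  identified (wired on S).  Identifying S is encoded by connecting all pairs of S.\<close>
definition wired_components :: "'v set \<Rightarrow> 'v set \<Rightarrow> 'v set set \<Rightarrow> 'v set set" where
  "wired_components V S F = V // ((adj F \<union> S \<times> S)\<^sup>*)"

definition height_function :: "'v set \<Rightarrow> 'v set set \<Rightarrow> ('v \<Rightarrow> int) \<Rightarrow> bool" where
  "height_function V E h \<longleftrightarrow> h \<in> extensional V \<and> (\<forall>v\<in>V. odd (h v)) \<and>
     (\<forall>e\<in>E. \<forall>v\<in>e. \<forall>w\<in>e. \<bar>h v - h w\<bar> \<le> 2)"

definition positive_height_function :: "'v set \<Rightarrow> 'v set set \<Rightarrow> ('v \<Rightarrow> int) \<Rightarrow> bool" where
  "positive_height_function V E H \<longleftrightarrow> height_function V E H \<and> (\<forall>v\<in>V. H v > 0)"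

definition hweight :: "'v set set \<Rightarrow> ('v set \<Rightarrow> real) \<Rightarrow> ('v \<Rightarrow> int) \<Rightarrow> real" where
  "hweight E c h = (\<Prod>e\<in>E. c e ^ (if \<forall>v\<in>e. \<forall>w\<in>e. h v = h w then 1 else 0))"

definition E_fix :: "'v set set \<Rightarrow> ('v \<Rightarrow> int) \<Rightarrow> 'v set set" where
  "E_fix E H = {e\<in>E. \<exists>v\<in>e. H v \<ge> 3}"

definition pe :: "('v set \<Rightarrow> real) \<Rightarrow> 'v set \<Rightarrow> real" where
  "pe c e = 1 - 1 / c e"

definition bern_weight :: "'v set set \<Rightarrow> ('v set \<Rightarrow> real) \<Rightarrow> 'v set set \<Rightarrow> real" where
  "bern_weight E c B = (\<Prod>e\<in>E. if e \<in> B then pe c e else 1 - pe c e)"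

definition omega :: "'v set set \<Rightarrow> ('v \<Rightarrow> int) \<Rightarrow> 'v set set \<Rightarrow> 'v set set" where
  "omega E h B = {e\<in>E.
      if (\<exists>v\<in>e. \<bar>h v\<bar> \<ge> 3) then True
      else if (\<exists>s\<in>{-1,1::int}. \<forall>v\<in>e. h v = s) then e \<in> B
      else False}"

text \<open>Sample space: height functions h with |h| = H and h > 0 on S, together with B \<subseteq> E.
  (S = {} gives the unconstrained case.)\<close>
definition hspace :: "'v set \<Rightarrow> 'v set set \<Rightarrow> ('v \<Rightarrow> int) \<Rightarrow> 'v set \<Rightarrow> ('v \<Rightarrow> int) set" where
  "hspace V E H S = {h. height_function V E h \<and> (\<forall>v\<in>V. \<bar>h v\<bar> = H v) \<and> (\<forall>v\<in>S. h v > 0)}"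

definition joint_weight :: "'v set set \<Rightarrow> ('v set \<Rightarrow> real) \<Rightarrow> ('v \<Rightarrow> int) \<times> 'v set set \<Rightarrow> real" where
  "joint_weight E c x = hweight E c (fst x) * bern_weight E c (snd x)"

definition hprob :: "'v set \<Rightarrow> 'v set set \<Rightarrow> ('v set \<Rightarrow> real) \<Rightarrow> ('v \<Rightarrow> int) \<Rightarrow> 'v set
    \<Rightarrow> (('v \<Rightarrow> int) \<times> 'v set set \<Rightarrow> bool) \<Rightarrow> real" where
  "hprob V E c H S Q =
     (\<Sum>x\<in>{x\<in>hspace V E H S \<times> Pow E. Q x}. joint_weight E c x) /
     (\<Sum>x\<in>hspace V E H S \<times> Pow E. joint_weight E c x)"

text \<open>FK-Ising measure (wired on S) conditioned on F \<subseteq> varpi.  The factors of the edges in F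
  are the same for all varpi \<supseteq> F and cancel in the conditional probability; they are
  omitted so that the conditional measure is also defined when some p_e = 0 on F.  Whenever P[F \<subseteq> varpi] > 0 this is the elementary conditional probability.\<close>
definition fk_cond :: "'v set \<Rightarrow> 'v set set \<Rightarrow> ('v set \<Rightarrow> real) \<Rightarrow> 'v set \<Rightarrow> 'v set set
    \<Rightarrow> 'v set set \<Rightarrow> real" where
  "fk_cond V E c S F w =
     (let fw = (\<lambda>u. 2 ^ card (wired_components V S u) *
                   (\<Prod>e\<in>E - F. pe c e ^ (if e \<in> u then 1 else 0) * (1 - pe c e) ^ (if e \<notin> u then 1 else 0)))
      in (if F \<subseteq> w \<and> w \<subseteq> E then fw w else 0) / (\<Sum>u\<in>{u. F \<subseteq> u \<and> u \<subseteq> E}. fw u))"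

end

theory Submission
  imports Defs
begin

definition ovl :: "('v\<Rightarrow>int) \<Rightarrow> 'v set \<Rightarrow> bool \<Rightarrow> bool" where
  "ovl h e b = (if (\<exists>v\<in>e. \<bar>h v\<bar> \<ge> 3) then True else if (\<exists>s\<in>{-1,1::int}. \<forall>v\<in>e. h v = s) then b else False)"

lemma omega_ovl: "omega E h B = {e\<in>E. ovl h e (e\<in>B)}"
  unfolding omega_def ovl_def by auto

lemma prod_if_zero:
  assumes "finite A"
  shows "(\<Prod>e\<in>A. if Q e then a e else (0::real)) = (if \<forall>e\<in>A. Q e then prod a A else 0)"
  using assms by (auto intro: prod.cong)

lemma sum_B:
  assumes fin: "finite E" and wE: "w \<subseteq> E"
  shows "(\<Sum>B\<in>{B\<in>Pow E. omega E h B = w}. bern_weight E c B) =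
    (\<Prod>e\<in>E. (if ovl h e True = (e\<in>w) then pe c e else 0) + (if ovl h e False = (e\<in>w) then 1 - pe c e else 0))"
proof -
  let ?f1 = "\<lambda>e. if ovl h e True = (e\<in>w) then pe c e else 0"
  let ?f2 = "\<lambda>e. if ovl h e False = (e\<in>w) then 1 - pe c e else 0"
  have "(\<Prod>e\<in>E. ?f1 e + ?f2 e) = (\<Sum>X\<in>Pow E. (\<Prod>x\<in>X. ?f1 x) * (\<Prod>x\<in>E-X. ?f2 x))"
    by (rule prod_add[OF fin])
  also have "\<dots> = (\<Sum>X\<in>Pow E. if omega E h X = w then bern_weight E c X else 0)"
  proof (rule sum.cong[OF refl])
    fix X assume X: "X \<in> Pow E"
    have eq1: "E \<inter> {x. x \<in> X} = X" "E \<inter> - {x. x \<in> X} = E - X" using X by auto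
    have "(\<Prod>x\<in>X. ?f1 x) * (\<Prod>x\<in>E-X. ?f2 x) = (\<Prod>e\<in>E. if e \<in> X then ?f1 e else ?f2 e)"
      using prod.If_cases[OF fin, of "\<lambda>e. e \<in> X" ?f1 ?f2] eq1 by simp
    also have "\<dots> = (\<Prod>e\<in>E. if ovl h e (e\<in>X) = (e\<in>w) then (if e \<in> X then pe c e else 1 - pe c e) else 0)"
      by (rule prod.cong) auto
    also have "\<dots> = (if \<forall>e\<in>E. ovl h e (e\<in>X) = (e\<in>w) then bern_weight E c X else 0)"
      unfolding bern_weight_def by (rule prod_if_zero[OF fin])
    also have "(\<forall>e\<in>E. ovl h e (e\<in>X) = (e\<in>w)) = (omega E h X = w)"
      unfolding omega_ovl using wE by auto
    finally show "(\<Prod>x\<in>X. ?f1 x) * (\<Prod>x\<in>E-X. ?f2 x) = (if omega E h X = w then bern_weight E c X else 0)" .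
  qed
  also have "\<dots> = (\<Sum>B\<in>{B\<in>Pow E. omega E h B = w}. bern_weight E c B)"
    by (rule sum.inter_filter[symmetric]) (simp add: fin)
  finally show ?thesis by simp
qed

definition ss :: "('v\<Rightarrow>int) \<Rightarrow> 'v set \<Rightarrow> bool" where
  "ss h e \<longleftrightarrow> (\<forall>x\<in>e. \<forall>y\<in>e. sgn (h x) = sgn (h y))"

definition cst :: "('v\<Rightarrow>int) \<Rightarrow> 'v set \<Rightarrow> bool" where
  "cst h e \<longleftrightarrow> (\<forall>x\<in>e. \<forall>y\<in>e. h x = h y)"

lemma cst_pair: "cst h {x,y} = (h x = h y)" by (auto simp: cst_def)
lemma ss_pair: "ss h {x,y} = (sgn (h x) = sgn (h y))" by (auto simp: ss_def)

lemma edge_cases: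
  assumes G: "graph V E" and PH: "positive_height_function V E H"
    and h: "h \<in> hspace V E H S" and e: "e \<in> E" and c: "c e \<ge> 1"
  shows "c e ^ (if cst h e then 1 else 0) *
     ((if ovl h e True = (e\<in>w) then pe c e else 0) + (if ovl h e False = (e\<in>w) then 1 - pe c e else 0))
   = (if e \<in> E_fix E H then (if e \<in> w then c e ^ (if cst H e then 1 else 0) else 0)
      else if e \<in> w then (if ss h e then c e - 1 else 0) else 1)"
proof -
  have "card e = 2" using G e unfolding graph_def by auto
  then obtain x y where exy: "e = {x,y}" "x \<noteq> y" unfolding card_2_iff by blast
  have xyV: "x \<in> V" "y \<in> V" using G e exy unfolding graph_def by auto
  have Hx: "H x > 0" "odd (H x)" "H y > 0" "odd (H y)" "\<bar>H x - H y\<bar> \<le> 2"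
    using PH xyV e exy unfolding positive_height_function_def height_function_def by auto
  have hx: "\<bar>h x\<bar> = H x" "\<bar>h y\<bar> = H y" "\<bar>h x - h y\<bar> \<le> 2"
    using h xyV e exy unfolding hspace_def height_function_def by auto
  have c0: "c e \<noteq> 0" using c by auto
  have Fe: "(e \<in> E_fix E H) = (H x \<ge> 3 \<or> H y \<ge> 3)" using e exy unfolding E_fix_def by auto
  show ?thesis
  proof (cases "H x \<ge> 3 \<or> H y \<ge> 3")
    case True
    have sx: "h x = H x \<or> h x = - H x" "h y = H y \<or> h y = - H y" using hx(1,2) by arith+
    have same: "(h x = H x \<and> h y = H y) \<or> (h x = - H x \<and> h y = - H y)"
      using sx hx(3) Hx(1,3) True by arith
    have "\<exists>v\<in>e. 3 \<le> \<bar>h v\<bar>" using True hx(1,2) exy by auto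
    then have ov: "ovl h e b" for b unfolding ovl_def by simp
    have "(h x = h y) = (H x = H y)" using same by arith
    then have cs: "cst h e = cst H e" unfolding exy(1) cst_pair .
    show ?thesis using True by (simp add: ov cs Fe pe_def)
  next
    case False
    have H1: "H x = 1" "H y = 1"
    proof -
      have "H x = 1 \<or> H x = 2" "H y = 1 \<or> H y = 2" using False Hx(1,3) by auto
      then show "H x = 1" "H y = 1" using Hx(2,4) by auto
    qed
    have hv: "h x = 1 \<or> h x = -1" "h y = 1 \<or> h y = -1" using hx(1,2) H1 by arith+
    have Fe': "e \<notin> E_fix E H" using Fe False by auto
    have n3: "\<not>(\<exists>v\<in>e. 3 \<le> \<bar>h v\<bar>)" using hv exy by auto
    show ?thesis
    proof (cases "h x = h y")
      case True
      have "\<exists>s\<in>{-1,1::int}. \<forall>v\<in>e. h v = s" using True hv exy by auto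
      then have ov: "ovl h e b = b" for b using n3 unfolding ovl_def by simp
      have "cst h e" "ss h e" using True unfolding exy(1) cst_pair ss_pair by auto
      then show ?thesis using Fe' ov c0 by (cases "e \<in> w") (simp_all add: pe_def field_simps)
    next
      case False
      have "\<not>(\<exists>s\<in>{-1,1::int}. \<forall>v\<in>e. h v = s)" using False exy by auto
      then have ov: "\<not> ovl h e b" for b using n3 unfolding ovl_def by (simp only: if_False if_True) simp
      have "\<not> cst h e" "\<not> ss h e" using False hv unfolding exy(1) cst_pair ss_pair by auto
      then show ?thesis using Fe' ov c0 by (cases "e \<in> w") (simp_all add: pe_def field_simps)
    qed
  qed
qed

lemma fix_ss:
  assumes G: "graph V E" and PH: "positive_height_function V E H"
    and h: "h \<in> hspace V E H S" and e: "e \<in> E_fix E H"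
  shows "ss h e"
proof -
  have eE: "e \<in> E" using e unfolding E_fix_def by auto
  have "card e = 2" using G eE unfolding graph_def by auto
  then obtain x y where exy: "e = {x,y}" "x \<noteq> y" unfolding card_2_iff by blast
  have xyV: "x \<in> V" "y \<in> V" using G eE exy unfolding graph_def by auto
  have Hx: "H x > 0" "H y > 0"
    using PH xyV unfolding positive_height_function_def by auto
  have hx: "\<bar>h x\<bar> = H x" "\<bar>h y\<bar> = H y" "\<bar>h x - h y\<bar> \<le> 2"
    using h xyV eE exy unfolding hspace_def height_function_def by auto
  have True: "H x \<ge> 3 \<or> H y \<ge> 3" using e exy unfolding E_fix_def by auto
  have sx: "h x = H x \<or> h x = - H x" "h y = H y \<or> h y = - H y" using hx(1,2) by arith+
  have same: "(h x = H x \<and> h y = H y) \<or> (h x = - H x \<and> h y = - H y)"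
    using sx hx(3) Hx True by arith
  then have "sgn (h x) = sgn (h y)" using Hx by auto
  then show ?thesis unfolding exy(1) ss_pair .
qed

lemma hweight_cst: "hweight E c h = (\<Prod>e\<in>E. c e ^ (if cst h e then 1 else 0))"
  unfolding hweight_def cst_def by simp

definition AA :: "'v set set \<Rightarrow> ('v set \<Rightarrow> real) \<Rightarrow> ('v \<Rightarrow> int) \<Rightarrow> real" where
  "AA E c H = (\<Prod>e\<in>E_fix E H. c e ^ (if cst H e then 1 else 0))"

definition GG :: "'v set set \<Rightarrow> ('v set \<Rightarrow> real) \<Rightarrow> ('v \<Rightarrow> int) \<Rightarrow> 'v set set \<Rightarrow> real" where
  "GG E c H w = (if E_fix E H \<subseteq> w then (\<Prod>e\<in>w - E_fix E H. c e - 1) else 0)"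

lemma inner_sum:
  assumes G: "graph V E" and PH: "positive_height_function V E H"
    and c: "\<forall>e\<in>E. c e \<ge> 1"
    and h: "h \<in> hspace V E H S" and wE: "w \<subseteq> E"
  shows "(\<Sum>B\<in>{B\<in>Pow E. omega E h B = w}. joint_weight E c (h,B))
     = AA E c H * GG E c H w * (if \<forall>e\<in>w. ss h e then 1 else 0)"
proof -
  have fin: "finite E"
  proof -
    have "finite V" using G unfolding graph_def by auto
    moreover have "E \<subseteq> Pow V" using G unfolding graph_def by auto
    ultimately show ?thesis by (meson finite_Pow_iff finite_subset)
  qed
  let ?F = "E_fix E H"
  have FE: "?F \<subseteq> E" unfolding E_fix_def by auto
  let ?phi = "\<lambda>e. (if e \<in> ?F then (if e \<in> w then c e ^ (if cst H e then 1 else 0) else 0)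
      else if e \<in> w then (if ss h e then c e - 1 else 0) else (1::real))"
  have "(\<Sum>B\<in>{B\<in>Pow E. omega E h B = w}. joint_weight E c (h,B))
      = hweight E c h * (\<Sum>B\<in>{B\<in>Pow E. omega E h B = w}. bern_weight E c B)"
    unfolding joint_weight_def by (simp add: sum_distrib_left)
  also have "\<dots> = (\<Prod>e\<in>E. ?phi e)"
    unfolding sum_B[OF fin wE] hweight_cst prod.distrib[symmetric]
    by (rule prod.cong[OF refl], rule edge_cases[OF G PH h _ ]) (use c in auto)
  also have "\<dots> = (\<Prod>e\<in>E - ?F. ?phi e) * (\<Prod>e\<in>?F. ?phi e)"
    by (rule prod.subset_diff[OF FE fin])
  also have "(\<Prod>e\<in>?F. ?phi e) = (\<Prod>e\<in>?F. if e \<in> w then c e ^ (if cst H e then 1 else 0) else 0)"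
    by (rule prod.cong) auto
  also have "\<dots> = (if ?F \<subseteq> w then AA E c H else 0)"
    unfolding AA_def by (subst prod_if_zero) (use fin FE finite_subset in auto)
  also have "(\<Prod>e\<in>E - ?F. ?phi e) = (\<Prod>e\<in>E - ?F. if e \<in> w then (if ss h e then c e - 1 else 0) else 1)"
    by (rule prod.cong) auto
  also have "\<dots> = (\<Prod>e\<in>w - ?F. if ss h e then c e - 1 else 0)"
  proof -
    have f: "finite (E - ?F)" using fin by auto
    have "(E - ?F) \<inter> {e. e \<in> w} = w - ?F" using wE by auto
    then show ?thesis using prod.If_cases[OF f, of "\<lambda>e. e \<in> w" "\<lambda>e. if ss h e then c e - 1 else 0" "\<lambda>_. 1"]
      by simp
  qed
  also have "\<dots> = (if \<forall>e\<in>w - ?F. ss h e then (\<Prod>e\<in>w - ?F. c e - 1) else 0)"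
    by (rule prod_if_zero) (use fin wE finite_subset in auto)
  finally have eq: "(\<Sum>B\<in>{B\<in>Pow E. omega E h B = w}. joint_weight E c (h,B))
     = (if \<forall>e\<in>w - ?F. ss h e then (\<Prod>e\<in>w - ?F. c e - 1) else 0) * (if ?F \<subseteq> w then AA E c H else 0)" .
  have "(\<forall>e\<in>w - ?F. ss h e) = (\<forall>e\<in>w. ss h e)" using fix_ss[OF G PH h] by auto
  then show ?thesis unfolding eq GG_def by auto
qed

lemma finite_E: "graph V E \<Longrightarrow> finite E"
proof -
  assume G: "graph V E"
  have "finite V" using G unfolding graph_def by auto
  moreover have "E \<subseteq> Pow V" using G unfolding graph_def by auto
  ultimately show ?thesis by (meson finite_Pow_iff finite_subset)
qed

lemma finite_hspace:
  assumes G: "graph V E"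
  shows "finite (hspace V E H S)"
proof -
  have "hspace V E H S \<subseteq> PiE V (\<lambda>v. {H v, - H v})"
    unfolding hspace_def height_function_def PiE_def Pi_def by (auto simp: abs_if)
  moreover have "finite (PiE V (\<lambda>v. {H v, - H v}))"
    using G unfolding graph_def by (intro finite_PiE) auto
  ultimately show ?thesis by (rule finite_subset)
qed

lemma num_sum:
  assumes G: "graph V E" and PH: "positive_height_function V E H"
    and c: "\<forall>e\<in>E. c e \<ge> 1" and wE: "w \<subseteq> E"
  shows "(\<Sum>x\<in>{x\<in>hspace V E H S \<times> Pow E. omega E (fst x) (snd x) = w \<and> P (fst x)}. joint_weight E c x)
     = AA E c H * GG E c H w * card {h\<in>hspace V E H S. (\<forall>e\<in>w. ss h e) \<and> P h}"
proof -
  let ?hs = "hspace V E H S"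
  have fh: "finite ?hs" by (rule finite_hspace[OF G])
  have fE: "finite E" by (rule finite_E[OF G])
  have set: "{x\<in>?hs \<times> Pow E. omega E (fst x) (snd x) = w \<and> P (fst x)}
      = Sigma {h\<in>?hs. P h} (\<lambda>h. {B\<in>Pow E. omega E h B = w})" by auto
  have "(\<Sum>x\<in>{x\<in>?hs \<times> Pow E. omega E (fst x) (snd x) = w \<and> P (fst x)}. joint_weight E c x)
      = (\<Sum>h\<in>{h\<in>?hs. P h}. \<Sum>B\<in>{B\<in>Pow E. omega E h B = w}. joint_weight E c (h,B))"
    unfolding set using sum.Sigma[of "{h\<in>?hs. P h}" "\<lambda>h. {B\<in>Pow E. omega E h B = w}" "\<lambda>h B. joint_weight E c (h,B)"] fh fE
    by simp
  also have "\<dots> = (\<Sum>h\<in>{h\<in>?hs. P h}. AA E c H * GG E c H w * (if \<forall>e\<in>w. ss h e then 1 else 0))"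
    by (rule sum.cong[OF refl], rule inner_sum[OF G PH c _ wE]) auto
  also have "\<dots> = AA E c H * GG E c H w * (\<Sum>h\<in>{h\<in>?hs. P h}. (if \<forall>e\<in>w. ss h e then 1 else 0))"
    by (simp add: sum_distrib_left)
  also have "(\<Sum>h\<in>{h\<in>?hs. P h}. (if \<forall>e\<in>w. ss h e then 1 else 0)) = (\<Sum>h\<in>{h\<in>{h\<in>?hs. P h}. \<forall>e\<in>w. ss h e}. (1::real))"
    by (rule sum.inter_filter[symmetric]) (use fh in auto)
  also have "{h\<in>{h\<in>?hs. P h}. \<forall>e\<in>w. ss h e} = {h\<in>?hs. (\<forall>e\<in>w. ss h e) \<and> P h}" by auto
  finally show ?thesis by simp
qed

lemma Z_sum:
  assumes G: "graph V E" and PH: "positive_height_function V E H"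
    and c: "\<forall>e\<in>E. c e \<ge> 1"
  shows "(\<Sum>x\<in>hspace V E H S \<times> Pow E. joint_weight E c x)
     = (\<Sum>u\<in>Pow E. AA E c H * GG E c H u * card {h\<in>hspace V E H S. \<forall>e\<in>u. ss h e})"
proof -
  let ?hs = "hspace V E H S"
  have fh: "finite ?hs" by (rule finite_hspace[OF G])
  have fE: "finite E" by (rule finite_E[OF G])
  have "(\<Sum>x\<in>?hs \<times> Pow E. joint_weight E c x)
     = (\<Sum>u\<in>Pow E. \<Sum>x\<in>{x. x \<in> ?hs \<times> Pow E \<and> omega E (fst x) (snd x) = u}. joint_weight E c x)"
    by (rule sum.group[symmetric]) (use fh fE in \<open>auto simp: omega_def\<close>)
  also have "\<dots> = (\<Sum>u\<in>Pow E. AA E c H * GG E c H u * card {h\<in>?hs. \<forall>e\<in>u. ss h e})"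
  proof (rule sum.cong[OF refl])
    fix u assume "u \<in> Pow E"
    then show "(\<Sum>x\<in>{x. x \<in> ?hs \<times> Pow E \<and> omega E (fst x) (snd x) = u}. joint_weight E c x)
      = AA E c H * GG E c H u * card {h\<in>?hs. \<forall>e\<in>u. ss h e}"
      using num_sum[OF G PH c, of u S "\<lambda>_. True"] by simp
  qed
  finally show ?thesis .
qed

lemma sym_adj: "sym (adj F)"
  unfolding adj_def sym_def by auto

lemma rtr_class_eq:
  assumes "sym r" "(a,b) \<in> r\<^sup>*"
  shows "r\<^sup>*``{a} = r\<^sup>*``{b}"
proof -
  have s: "sym (r\<^sup>*)" using assms(1) by (rule sym_rtrancl)
  have ba: "(b,a) \<in> r\<^sup>*" using s assms(2) by (auto dest: symD)
  show ?thesis using assms(2) ba by (auto intro: rtrancl_trans)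
qed

lemma adj_class_eq: "(a,b) \<in> (adj u)\<^sup>* \<Longrightarrow> (adj u)\<^sup>*``{a} = (adj u)\<^sup>*``{b}"
  by (rule rtr_class_eq[OF sym_adj])

lemma R_V:
  assumes G: "graph V E" and uE: "u \<subseteq> E" and x: "x \<in> V" and xy: "(x,y) \<in> (adj u)\<^sup>*"
  shows "y \<in> V"
  using xy
proof (induction rule: rtrancl_induct)
  case base then show ?case using x .
next
  case (step y z)
  then show ?case using G uE unfolding adj_def graph_def by auto
qed

lemma ss_R:
  assumes ss: "\<forall>e\<in>u. ss h e" and xy: "(x,y) \<in> (adj u)\<^sup>*"
  shows "sgn (h x) = sgn (h y)"
  using xy
proof (induction rule: rtrancl_induct)
  case base then show ?case by simp
next
  case (step y z)
  then show ?case using ss unfolding adj_def ss_def by auto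
qed

lemma adj_in: "e \<in> u \<Longrightarrow> x \<in> e \<Longrightarrow> y \<in> e \<Longrightarrow> (x,y) \<in> (adj u)\<^sup>*"
  unfolding adj_def by auto

lemma hspace_intro:
  assumes G: "graph V E" and PH: "positive_height_function V E H"
    and Fu: "E_fix E H \<subseteq> u"
    and ext: "h \<in> extensional V" and abs: "\<forall>v\<in>V. \<bar>h v\<bar> = H v" and pos: "\<forall>v\<in>S. h v > 0"
    and ss: "\<forall>e\<in>u. ss h e"
  shows "h \<in> hspace V E H S"
proof -
  have Hp: "\<forall>v\<in>V. H v > 0 \<and> odd (H v)" and Hh: "\<forall>e\<in>E. \<forall>v\<in>e. \<forall>w\<in>e. \<bar>H v - H w\<bar> \<le> 2"
    using PH unfolding positive_height_function_def height_function_def by auto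
  have odd: "\<forall>v\<in>V. odd (h v)"
  proof
    fix v assume v: "v \<in> V"
    have "\<bar>h v\<bar> = H v" using abs v by auto
    then have "h v = H v \<or> h v = - H v" by arith
    then show "odd (h v)" using Hp v by auto
  qed
  have hh: "\<bar>h a - h b\<bar> \<le> 2" if e: "e \<in> E" and a: "a \<in> e" and b: "b \<in> e" for e a b
  proof -
    have ab: "a \<in> V" "b \<in> V" using G e a b unfolding graph_def by auto
    have habs: "\<bar>h a\<bar> = H a" "\<bar>h b\<bar> = H b" using abs ab by auto
    show ?thesis
    proof (cases "e \<in> E_fix E H")
      case True
      then have "sgn (h a) = sgn (h b)" using ss Fu a b unfolding ss_def by auto
      moreover have "h a = sgn (h a) * H a" "h b = sgn (h b) * H b"
        using habs by (metis sgn_mult_abs)+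
      ultimately have "h a - h b = sgn (h a) * (H a - H b)" by (metis right_diff_distrib)
      then have "\<bar>h a - h b\<bar> = \<bar>sgn (h a)\<bar> * \<bar>H a - H b\<bar>" by (simp add: abs_mult)
      also have "\<dots> \<le> \<bar>H a - H b\<bar>" by (simp add: abs_sgn_eq)
      also have "\<dots> \<le> 2" using Hh e a b by auto
      finally show ?thesis .
    next
      case False
      then have "H a < 3" "H b < 3" using e a b unfolding E_fix_def by auto
      then have "H a = 1 \<or> H a = 2" "H b = 1 \<or> H b = 2" using Hp ab by auto
      then have "H a = 1" "H b = 1" using Hp ab by auto
      then show ?thesis using habs by arith
    qed
  qed
  show ?thesis unfolding hspace_def height_function_def
    using ext odd hh abs pos by auto
qed

lemma count_N:
  assumes G: "graph V E" and PH: "positive_height_function V E H" and SV: "S \<subseteq> V"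
    and Fu: "E_fix E H \<subseteq> u" and uE: "u \<subseteq> E"
  shows "card {h\<in>hspace V E H S. \<forall>e\<in>u. ss h e} = 2 ^ card {C\<in>components V u. C \<inter> S = {}}"
proof -
  let ?R = "(adj u)\<^sup>*"
  let ?D = "{C\<in>components V u. C \<inter> S = {}}"
  let ?Val = "{h\<in>hspace V E H S. \<forall>e\<in>u. ss h e}"
  define Psi where "Psi = (\<lambda>f::'a set \<Rightarrow> int. (\<lambda>v. if v \<in> V then (if ?R``{v} \<in> ?D then f (?R``{v}) else 1) * H v else undefined))"
  have Hp: "\<forall>v\<in>V. H v > 0" using PH unfolding positive_height_function_def by auto
  have finV: "finite V" using G unfolding graph_def by auto
  have compq: "components V u = (\<lambda>x. ?R``{x}) ` V" unfolding components_def quotient_def by auto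
  have finD: "finite ?D" using finV compq by auto
  have Dform: "\<exists>x\<in>V. C = ?R``{x}" if "C \<in> ?D" for C using that compq by auto
  have inj: "inj_on Psi (?D \<rightarrow>\<^sub>E {-1,1})"
  proof (rule inj_onI)
    fix f g assume f: "f \<in> ?D \<rightarrow>\<^sub>E {-1,1}" and g: "g \<in> ?D \<rightarrow>\<^sub>E {-1,1}" and eq: "Psi f = Psi g"
    show "f = g"
    proof (rule PiE_ext[OF f g])
      fix C assume C: "C \<in> ?D"
      then obtain x where x: "x \<in> V" "C = ?R``{x}" using Dform by blast
      have "Psi f x = Psi g x" using eq by simp
      then have "f C * H x = g C * H x" using x C unfolding Psi_def by simp
      then show "f C = g C" using Hp x by auto
    qed
  qed
  have img1: "Psi f \<in> ?Val" if f: "f \<in> ?D \<rightarrow>\<^sub>E {-1,1}" for f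
  proof -
    let ?fac = "\<lambda>v. if ?R``{v} \<in> ?D then f (?R``{v}) else 1"
    have fac: "?fac v \<in> {-1,1}" for v using f by auto
    have Pv: "Psi f v = ?fac v * H v" if "v \<in> V" for v using that unfolding Psi_def by simp
    have ext: "Psi f \<in> extensional V" unfolding Psi_def extensional_def by auto
    have abs: "\<forall>v\<in>V. \<bar>Psi f v\<bar> = H v"
    proof
      fix v assume v: "v \<in> V"
      show "\<bar>Psi f v\<bar> = H v" using fac[of v] Hp v Pv[OF v] by (auto simp: abs_mult)
    qed
    have sgnP: "sgn (Psi f v) = ?fac v" if v: "v \<in> V" for v
      using fac[of v] Hp v Pv[OF v] by (auto simp: sgn_mult)
    have pos: "\<forall>v\<in>S. Psi f v > 0"
    proof
      fix v assume v: "v \<in> S"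
      then have vV: "v \<in> V" using SV by auto
      have "v \<in> ?R``{v}" by auto
      then have "?R``{v} \<notin> ?D" using v by auto
      then show "Psi f v > 0" using Pv[OF vV] Hp vV by auto
    qed
    have ss: "\<forall>e\<in>u. ss h e" if "h = Psi f" for h
    proof
      fix e assume e: "e \<in> u"
      show "ss h e" unfolding ss_def
      proof (intro ballI)
        fix a b assume a: "a \<in> e" and b: "b \<in> e"
        have ab: "a \<in> V" "b \<in> V" using G e uE a b unfolding graph_def by auto
        have "?R``{a} = ?R``{b}" by (rule adj_class_eq[OF adj_in[OF e a b]])
        then show "sgn (h a) = sgn (h b)" using sgnP[OF ab(1)] sgnP[OF ab(2)] that by simp
      qed
    qed
    have "Psi f \<in> hspace V E H S" by (rule hspace_intro[OF G PH Fu ext abs pos ss]) simp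
    then show ?thesis using ss by auto
  qed
  have img2: "h \<in> Psi ` (?D \<rightarrow>\<^sub>E {-1,1})" if h: "h \<in> ?Val" for h
  proof -
    have hs: "h \<in> hspace V E H S" and ss: "\<forall>e\<in>u. ss h e" using h by auto
    have ext: "h \<in> extensional V" and abs: "\<forall>v\<in>V. \<bar>h v\<bar> = H v" and pos: "\<forall>v\<in>S. h v > 0"
      using hs unfolding hspace_def height_function_def by auto
    have hv: "h v = sgn (h v) * H v" if "v \<in> V" for v using abs that by (metis sgn_mult_abs)
    have sv: "sgn (h v) \<in> {-1,1}" if "v \<in> V" for v
    proof -
      have "\<bar>h v\<bar> = H v" "H v > 0" using abs Hp that by auto
      then have "h v \<noteq> 0" by auto
      then show ?thesis by (auto simp: sgn_if)
    qed
    define f where "f = (\<lambda>C\<in>?D. sgn (h (SOME v. v \<in> C)))"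
    have some: "(SOME v. v \<in> ?R``{x}) \<in> ?R``{x}" for x by (rule someI[of _ x]) auto
    have fP: "f \<in> ?D \<rightarrow>\<^sub>E {-1,1}"
    proof
      fix C assume C: "C \<in> ?D"
      then obtain x where x: "x \<in> V" "C = ?R``{x}" using Dform by blast
      have "(SOME v. v \<in> C) \<in> V" using some[of x] x R_V[OF G uE x(1)] by auto
      then show "f C \<in> {-1,1}" using C sv unfolding f_def by auto
    next
      fix C assume "C \<notin> ?D" then show "f C = undefined" unfolding f_def by auto
    qed
    have "Psi f = h"
    proof
      fix v show "Psi f v = h v"
      proof (cases "v \<in> V")
        case False then show ?thesis using ext unfolding Psi_def extensional_def by auto
      next
        case True
        show ?thesis
        proof (cases "?R``{v} \<in> ?D")
          case inD: True
          have "(SOME w. w \<in> ?R``{v}) \<in> ?R``{v}" by (rule some)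
          then have "sgn (h v) = sgn (h (SOME w. w \<in> ?R``{v}))" using ss_R[OF ss] by auto
          then have "f (?R``{v}) = sgn (h v)" using inD unfolding f_def by auto
          then show ?thesis using True inD hv[OF True] unfolding Psi_def by simp
        next
          case notD: False
          have "?R``{v} \<in> components V u" using compq True by auto
          then obtain s where s: "s \<in> S" "s \<in> ?R``{v}" using notD by auto
          then have "sgn (h v) = sgn (h s)" using ss_R[OF ss] by auto
          also have "\<dots> = 1" using pos s by auto
          finally have sg1: "sgn (h v) = 1" .
          have "Psi f v = (if ?R``{v} \<in> ?D then f (?R``{v}) else 1) * H v"
            by (simp only: Psi_def if_P[OF True])
          then have "Psi f v = H v" by (simp only: if_not_P[OF notD] mult_1)
          then show ?thesis using hv[OF True] sg1 by simp
        qed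
      qed
    qed
    then show ?thesis using fP by auto
  qed
  have "bij_betw Psi (?D \<rightarrow>\<^sub>E {-1,1}) ?Val"
    by (rule bij_betw_imageI[OF inj]) (use img1 img2 in auto)
  then have "card ?Val = card (?D \<rightarrow>\<^sub>E {-1::int,1})" by (simp add: bij_betw_same_card)
  also have "\<dots> = 2 ^ card ?D"
  proof -
    have "card {-1::int,1} = 2" by simp
    then show ?thesis using finD by (simp add: card_PiE del: card_insert_disjoint)
  qed
  finally show ?thesis .
qed

lemma card_wired:
  assumes G: "graph V E" and SV: "S \<subseteq> V"
  shows "card (wired_components V S u) = card {C\<in>components V u. C \<inter> S = {}} + (if S = {} then 0 else 1)"
proof (cases "S = {}")
  case True then show ?thesis unfolding wired_components_def components_def by simp
next
  case False
  then obtain s0 where s0: "s0 \<in> S" by auto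
  let ?R = "(adj u)\<^sup>*"
  let ?R' = "(adj u \<union> S \<times> S)\<^sup>*"
  let ?D = "{C\<in>components V u. C \<inter> S = {}}"
  let ?T = "?R'``{s0}"
  have finV: "finite V" using G unfolding graph_def by auto
  have compq: "components V u = (\<lambda>x. ?R``{x}) ` V" unfolding components_def quotient_def by auto
  have wq: "wired_components V S u = (\<lambda>x. ?R'``{x}) ` V" unfolding wired_components_def quotient_def by auto
  have finD: "finite ?D" using finV compq by auto
  have symR': "sym (adj u \<union> S \<times> S)" using sym_adj[of u] unfolding sym_def by auto
  have RR': "?R \<subseteq> ?R'" by (rule rtrancl_mono) auto
  have i: "?R'``{x} = ?R``{x}" if x: "?R``{x} \<inter> S = {}" for x
  proof
    show "?R``{x} \<subseteq> ?R'``{x}" using RR' by auto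
    have "(x,y) \<in> ?R" if "(x,y) \<in> ?R'" for y
      using that
    proof (induction rule: rtrancl_induct)
      case base then show ?case by simp
    next
      case (step y z)
      show ?case
      proof (cases "(y,z) \<in> adj u")
        case True then show ?thesis using step.IH by (rule rtrancl_into_rtrancl[rotated])
      next
        case False
        then have "y \<in> S" using step.hyps(2) by auto
        then show ?thesis using step.IH x by auto
      qed
    qed
    then show "?R'``{x} \<subseteq> ?R``{x}" by auto
  qed
  have ii: "?R'``{x} = ?T" if x: "?R``{x} \<inter> S \<noteq> {}" for x
  proof -
    obtain s where s: "s \<in> S" "(x,s) \<in> ?R" using x by auto
    have "(x,s) \<in> ?R'" using s RR' by auto
    moreover have "(s,s0) \<in> ?R'" using s s0 by auto
    ultimately have "(x,s0) \<in> ?R'" by (rule rtrancl_trans)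
    then show ?thesis by (rule rtr_class_eq[OF symR'])
  qed
  have eq: "wired_components V S u = insert ?T ?D"
  proof
    show "wired_components V S u \<subseteq> insert ?T ?D"
    proof
      fix C assume "C \<in> wired_components V S u"
      then obtain x where x: "x \<in> V" "C = ?R'``{x}" using wq by auto
      show "C \<in> insert ?T ?D"
      proof (cases "?R``{x} \<inter> S = {}")
        case True then show ?thesis using i[OF True] x compq by auto
      next
        case False then show ?thesis using ii[OF False] x by auto
      qed
    qed
    show "insert ?T ?D \<subseteq> wired_components V S u"
    proof
      fix C assume C: "C \<in> insert ?T ?D"
      show "C \<in> wired_components V S u"
      proof (cases "C = ?T")
        case True then show ?thesis using wq s0 SV by auto
      next
        case False
        then have "C \<in> ?D" using C by auto
        then obtain x where x: "x \<in> V" "C = ?R``{x}" "?R``{x} \<inter> S = {}" using compq by auto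
        then show ?thesis using i[OF x(3)] wq by auto
      qed
    qed
  qed
  have "?T \<notin> ?D" using s0 by auto
  then show ?thesis unfolding eq using finD False by simp
qed

lemma count_sigma:
  assumes G: "graph V E" and PH: "positive_height_function V E H" and SV: "S \<subseteq> V"
    and Fu: "E_fix E H \<subseteq> w" and wE: "w \<subseteq> E" and sig: "\<forall>v\<in>V. \<sigma> v \<in> {-1, 1}"
  shows "card {h\<in>hspace V E H S. (\<forall>e\<in>w. ss h e) \<and> (\<forall>v\<in>V. sgn (h v) = \<sigma> v)}
    = (if (\<forall>C\<in>components V w. \<forall>u\<in>C. \<forall>v\<in>C. \<sigma> u = \<sigma> v) \<and> (\<forall>v\<in>S. \<sigma> v = 1) then 1 else 0)"
proof -
  let ?R = "(adj w)\<^sup>*"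
  let ?X = "{h\<in>hspace V E H S. (\<forall>e\<in>w. ss h e) \<and> (\<forall>v\<in>V. sgn (h v) = \<sigma> v)}"
  have Hp: "\<forall>v\<in>V. H v > 0" using PH unfolding positive_height_function_def by auto
  have compq: "components V w = (\<lambda>x. ?R``{x}) ` V" unfolding components_def quotient_def by auto
  show ?thesis
  proof (cases "(\<forall>C\<in>components V w. \<forall>u\<in>C. \<forall>v\<in>C. \<sigma> u = \<sigma> v) \<and> (\<forall>v\<in>S. \<sigma> v = 1)")
    case True
    then have cC: "\<forall>C\<in>components V w. \<forall>u\<in>C. \<forall>v\<in>C. \<sigma> u = \<sigma> v" and cS: "\<forall>v\<in>S. \<sigma> v = 1" by blast+
    define hs where "hs = (\<lambda>v. if v \<in> V then \<sigma> v * H v else undefined)"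
    have hsv: "hs v = \<sigma> v * H v" if "v \<in> V" for v using that unfolding hs_def by simp
    have sg: "sgn (hs v) = \<sigma> v" if v: "v \<in> V" for v
    proof -
      have "\<sigma> v = -1 \<or> \<sigma> v = 1" "H v > 0" using sig Hp v by auto
      then show ?thesis unfolding hsv[OF v] by (auto simp: sgn_mult)
    qed
    have ext: "hs \<in> extensional V" unfolding hs_def extensional_def by auto
    have abs: "\<forall>v\<in>V. \<bar>hs v\<bar> = H v"
    proof
      fix v assume v: "v \<in> V"
      have "\<sigma> v = -1 \<or> \<sigma> v = 1" "H v > 0" using sig Hp v by auto
      then show "\<bar>hs v\<bar> = H v" unfolding hsv[OF v] by (auto simp: abs_mult)
    qed
    have pos: "\<forall>v\<in>S. hs v > 0"
    proof
      fix v assume v: "v \<in> S"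
      then have vV: "v \<in> V" using SV by auto
      have "\<sigma> v = 1" "H v > 0" using cS Hp v vV by auto
      then show "hs v > 0" unfolding hsv[OF vV] by simp
    qed
    have ss: "\<forall>e\<in>w. ss hs e"
    proof
      fix e assume e: "e \<in> w"
      show "ss hs e" unfolding ss_def
      proof (intro ballI)
        fix a b assume a: "a \<in> e" and b: "b \<in> e"
        have ab: "a \<in> V" "b \<in> V" using G e wE a b unfolding graph_def by auto
        have "?R``{a} \<in> components V w" using compq ab by auto
        moreover have "a \<in> ?R``{a}" "b \<in> ?R``{a}" using adj_in[OF e a b] by auto
        ultimately have "\<sigma> a = \<sigma> b" using cC by blast
        then show "sgn (hs a) = sgn (hs b)" using sg ab by simp
      qed
    qed
    have hsin: "hs \<in> hspace V E H S" by (rule hspace_intro[OF G PH Fu ext abs pos ss])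
    have "?X = {hs}"
    proof
      show "{hs} \<subseteq> ?X" using hsin ss sg by auto
      show "?X \<subseteq> {hs}"
      proof
        fix h assume h: "h \<in> ?X"
        have ext': "h \<in> extensional V" and abs': "\<forall>v\<in>V. \<bar>h v\<bar> = H v"
          using h unfolding hspace_def height_function_def by auto
        have "h = hs"
        proof
          fix v show "h v = hs v"
          proof (cases "v \<in> V")
            case False then show ?thesis using ext' unfolding hs_def extensional_def by auto
          next
            case True
            have "h v = sgn (h v) * \<bar>h v\<bar>" by (simp add: sgn_mult_abs)
            also have "\<dots> = \<sigma> v * H v" using h True abs' by auto
            finally show ?thesis unfolding hs_def using True by simp
          qed
        qed
        then show "h \<in> {hs}" by simp
      qed
    qed
    then have "card ?X = 1" by simp
    then show ?thesis by (simp only: if_P[OF True])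
  next
    case False
    have "?X = {}"
    proof (rule ccontr)
      assume "?X \<noteq> {}"
      then obtain h where h: "h \<in> ?X" by blast
      have ssh: "\<forall>e\<in>w. ss h e" and sgh: "\<forall>v\<in>V. sgn (h v) = \<sigma> v" and hs: "h \<in> hspace V E H S" using h by auto
      have pos: "\<forall>v\<in>S. h v > 0" using hs unfolding hspace_def by auto
      have c1: "\<forall>C\<in>components V w. \<forall>u\<in>C. \<forall>v\<in>C. \<sigma> u = \<sigma> v"
      proof (intro ballI)
        fix C a b assume C: "C \<in> components V w" and a: "a \<in> C" and b: "b \<in> C"
        obtain x where x: "x \<in> V" "C = ?R``{x}" using C compq by auto
        have xa: "(x,a) \<in> ?R" and xb: "(x,b) \<in> ?R" using a b x by auto
        have ab: "a \<in> V" "b \<in> V" using R_V[OF G wE x(1)] xa xb by auto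
        have "sgn (h a) = sgn (h b)" using ss_R[OF ssh xa] ss_R[OF ssh xb] by simp
        then show "\<sigma> a = \<sigma> b" using sgh ab by auto
      qed
      have c2: "\<forall>v\<in>S. \<sigma> v = 1"
      proof
        fix v assume v: "v \<in> S"
        then have "v \<in> V" "h v > 0" using SV pos by auto
        then show "\<sigma> v = 1" using sgh by force
      qed
      show False using False c1 c2 by blast
    qed
    then have "card ?X = 0" by (simp only: card.empty)
    then show ?thesis by (simp only: if_not_P[OF False])
  qed
qed

lemma fk_weight:
  assumes G: "graph V E" and PH: "positive_height_function V E H" and SV: "S \<subseteq> V"
    and c: "\<forall>e\<in>E. c e \<ge> 1"
    and Fu: "E_fix E H \<subseteq> u" and uE: "u \<subseteq> E"
  shows "2 ^ card (wired_components V S u) *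
      (\<Prod>e\<in>E - E_fix E H. pe c e ^ (if e \<in> u then 1 else 0) * (1 - pe c e) ^ (if e \<notin> u then 1 else 0))
    = (\<Prod>e\<in>E - E_fix E H. 1 / c e) * (if S = {} then 1 else 2) * (GG E c H u * card {h\<in>hspace V E H S. \<forall>e\<in>u. ss h e})"
proof -
  let ?F = "E_fix E H"
  have fE: "finite E" by (rule finite_E[OF G])
  have f: "finite (E - ?F)" using fE by auto
  have "(\<Prod>e\<in>E - ?F. pe c e ^ (if e \<in> u then 1 else 0) * (1 - pe c e) ^ (if e \<notin> u then 1 else 0))
      = (\<Prod>e\<in>E - ?F. 1 / c e * (if e \<in> u then c e - 1 else 1))"
  proof (rule prod.cong[OF refl])
    fix e assume "e \<in> E - ?F"
    then have "c e \<ge> 1" using c by auto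
    then show "pe c e ^ (if e \<in> u then 1 else 0) * (1 - pe c e) ^ (if e \<notin> u then 1 else 0)
      = 1 / c e * (if e \<in> u then c e - 1 else 1)" by (auto simp: pe_def field_simps)
  qed
  also have "\<dots> = (\<Prod>e\<in>E - ?F. 1 / c e) * (\<Prod>e\<in>E - ?F. if e \<in> u then c e - 1 else 1)"
    by (rule prod.distrib)
  also have "(\<Prod>e\<in>E - ?F. if e \<in> u then c e - 1 else 1) = (\<Prod>e\<in>u - ?F. c e - 1)"
  proof -
    have "(E - ?F) \<inter> {e. e \<in> u} = u - ?F" using uE by auto
    then show ?thesis using prod.If_cases[OF f, of "\<lambda>e. e \<in> u" "\<lambda>e. c e - 1" "\<lambda>_. 1"] by simp
  qed
  also have "\<dots> = GG E c H u" unfolding GG_def using Fu by simp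
  finally have P: "(\<Prod>e\<in>E - ?F. pe c e ^ (if e \<in> u then 1 else 0) * (1 - pe c e) ^ (if e \<notin> u then 1 else 0))
      = (\<Prod>e\<in>E - ?F. 1 / c e) * GG E c H u" .
  have N: "real (card {h\<in>hspace V E H S. \<forall>e\<in>u. ss h e}) = 2 ^ card {C\<in>components V u. C \<inter> S = {}}"
    using count_N[OF G PH SV Fu uE] by simp
  have W: "(2::real) ^ card (wired_components V S u) = (if S = {} then 1 else 2) * 2 ^ card {C\<in>components V u. C \<inter> S = {}}"
    using card_wired[OF G SV, of u] by (simp add: power_add)
  show ?thesis unfolding P W N by (simp add: algebra_simps)
qed

lemma hprob_omega:
  assumes G: "graph V E" and PH: "positive_height_function V E H"
    and c: "\<forall>e\<in>E. c e \<ge> 1" and wE: "w \<subseteq> E"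
  shows "hprob V E c H S (\<lambda>(h,B). omega E h B = w \<and> P h)
    = AA E c H * GG E c H w * card {h\<in>hspace V E H S. (\<forall>e\<in>w. ss h e) \<and> P h}
      / (\<Sum>u\<in>Pow E. AA E c H * GG E c H u * card {h\<in>hspace V E H S. \<forall>e\<in>u. ss h e})"
proof -
  have eq: "{x\<in>hspace V E H S \<times> Pow E. (\<lambda>(h,B). omega E h B = w \<and> P h) x}
     = {x\<in>hspace V E H S \<times> Pow E. omega E (fst x) (snd x) = w \<and> P (fst x)}" by (auto simp: split_beta)
  show ?thesis unfolding hprob_def eq Z_sum[OF G PH c] num_sum[OF G PH c wE] by (rule refl)
qed

lemma hprob_omega_notE:
  assumes "\<not> w \<subseteq> E"
  shows "hprob V E c H S (\<lambda>(h,B). omega E h B = w \<and> P h) = 0"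
proof -
  have sub: "omega E h B \<subseteq> E" for h B unfolding omega_def by auto
  have eq: "{x\<in>hspace V E H S \<times> Pow E. (\<lambda>(h,B). omega E h B = w \<and> P h) x} = {}"
    using assms sub by (auto simp: split_beta)
  show ?thesis unfolding hprob_def eq by simp
qed

lemma AA_pos: "\<forall>e\<in>E. c e \<ge> 1 \<Longrightarrow> AA E c H > 0"
  unfolding AA_def E_fix_def by (rule prod_pos) (auto intro: less_le_trans[of 0 1])

theorem corollary2p5:
  fixes V :: "'v set" and E :: "'v set set" and c :: "'v set \<Rightarrow> real"
    and H :: "'v \<Rightarrow> int" and S :: "'v set"
  assumes "graph V E" and "graph_connected V E"
    and "\<forall>e\<in>E. c e \<ge> 1"
    and "positive_height_function V E H"
    and "S \<subseteq> V"
  shows "(\<forall>w. w \<subseteq> E \<longrightarrow>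
            hprob V E c H S (\<lambda>(h,B). omega E h B = w) = fk_cond V E c S (E_fix E H) w)
       \<and> (\<forall>w \<sigma>. hprob V E c H S (\<lambda>(h,B). omega E h B = w) > 0 \<and> (\<forall>v\<in>V. \<sigma> v \<in> {-1, 1}) \<longrightarrow>
            hprob V E c H S (\<lambda>(h,B). omega E h B = w \<and> (\<forall>v\<in>V. sgn (h v) = \<sigma> v))
              / hprob V E c H S (\<lambda>(h,B). omega E h B = w)
            = (if (\<forall>C\<in>components V w. \<forall>u\<in>C. \<forall>v\<in>C. \<sigma> u = \<sigma> v) \<and> (\<forall>v\<in>S. \<sigma> v = 1)
               then 1 / 2 ^ card {C\<in>components V w. C \<inter> S = {}}
               else 0))"
proof -
  note G = assms(1) and PH = assms(4) and c = assms(3) and SV = assms(5)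
  let ?F = "E_fix E H"
  let ?hs = "hspace V E H S"
  define N where "N = (\<lambda>u. real (card {h\<in>?hs. \<forall>e\<in>u. ss h e}))"
  define Y where "Y = (\<Sum>u\<in>Pow E. GG E c H u * N u)"
  let ?A = "AA E c H"
  have Apos: "?A > 0" by (rule AA_pos[OF c])
  have fE: "finite E" by (rule finite_E[OF G])
  have hp: "hprob V E c H S (\<lambda>(h,B). omega E h B = w) = ?A * (GG E c H w * N w) / (?A * Y)"
    if wE: "w \<subseteq> E" for w
    using hprob_omega[OF G PH c wE, of S "\<lambda>_. True"]
    unfolding N_def Y_def by (simp add: sum_distrib_left mult.assoc)
  have part1: "hprob V E c H S (\<lambda>(h,B). omega E h B = w) = fk_cond V E c S ?F w" if wE: "w \<subseteq> E" for w
  proof -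
    define PP where "PP = (\<Prod>e\<in>E - ?F. 1 / c e) * (if S = {} then 1 else 2 :: real)"
    have PPpos: "PP > 0" unfolding PP_def using c by (auto intro!: prod_pos)
    let ?fw = "\<lambda>u. 2 ^ card (wired_components V S u) *
                   (\<Prod>e\<in>E - ?F. pe c e ^ (if e \<in> u then 1 else 0) * (1 - pe c e) ^ (if e \<notin> u then 1 else 0))"
    have fw: "?fw u = PP * (GG E c H u * N u)" if "?F \<subseteq> u" "u \<subseteq> E" for u
      using fk_weight[OF G PH SV c that] unfolding PP_def N_def by (simp add: mult.assoc)
    have GG0: "GG E c H u = 0" if "\<not> ?F \<subseteq> u" for u using that unfolding GG_def by simp
    have den: "(\<Sum>u\<in>{u. ?F \<subseteq> u \<and> u \<subseteq> E}. ?fw u) = PP * Y"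
    proof -
      have "(\<Sum>u\<in>{u. ?F \<subseteq> u \<and> u \<subseteq> E}. ?fw u) = (\<Sum>u\<in>{u. ?F \<subseteq> u \<and> u \<subseteq> E}. PP * (GG E c H u * N u))"
        by (rule sum.cong) (auto simp: fw)
      also have "\<dots> = PP * (\<Sum>u\<in>{u. ?F \<subseteq> u \<and> u \<subseteq> E}. GG E c H u * N u)" by (simp add: sum_distrib_left)
      also have "(\<Sum>u\<in>{u. ?F \<subseteq> u \<and> u \<subseteq> E}. GG E c H u * N u) = Y"
        unfolding Y_def by (rule sum.mono_neutral_left) (use fE GG0 in auto)
      finally show ?thesis .
    qed
    have num: "(if ?F \<subseteq> w \<and> w \<subseteq> E then ?fw w else 0) = PP * (GG E c H w * N w)"
      using fw[of w] wE GG0[of w] by auto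
    have "fk_cond V E c S ?F w = PP * (GG E c H w * N w) / (PP * Y)"
      unfolding fk_cond_def Let_def num den ..
    also have "\<dots> = (GG E c H w * N w) / Y" using PPpos by simp
    also have "\<dots> = ?A * (GG E c H w * N w) / (?A * Y)" using Apos by simp
    finally show ?thesis using hp[OF wE] by simp
  qed
  have part2: "hprob V E c H S (\<lambda>(h,B). omega E h B = w \<and> (\<forall>v\<in>V. sgn (h v) = \<sigma> v))
              / hprob V E c H S (\<lambda>(h,B). omega E h B = w)
            = (if (\<forall>C\<in>components V w. \<forall>u\<in>C. \<forall>v\<in>C. \<sigma> u = \<sigma> v) \<and> (\<forall>v\<in>S. \<sigma> v = 1)
               then 1 / 2 ^ card {C\<in>components V w. C \<inter> S = {}}
               else 0)"
    if pos: "hprob V E c H S (\<lambda>(h,B). omega E h B = w) > 0" and sig: "\<forall>v\<in>V. \<sigma> v \<in> {-1, 1}" for w \<sigma>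
  proof -
    have wE: "w \<subseteq> E"
    proof (rule ccontr)
      assume "\<not> w \<subseteq> E"
      then have "hprob V E c H S (\<lambda>(h,B). omega E h B = w \<and> True) = 0" by (rule hprob_omega_notE)
      then show False using pos by simp
    qed
    have "?A * (GG E c H w * N w) / (?A * Y) = (GG E c H w * N w) / Y" using Apos by simp
    then have p: "(GG E c H w * N w) / Y > 0" using pos hp[OF wE] by simp
    then have GGw: "GG E c H w \<noteq> 0" and Y0: "Y \<noteq> 0" by auto
    then have Fw: "?F \<subseteq> w" unfolding GG_def by (auto split: if_splits)
    define cond where "cond = ((\<forall>C\<in>components V w. \<forall>u\<in>C. \<forall>v\<in>C. \<sigma> u = \<sigma> v) \<and> (\<forall>v\<in>S. \<sigma> v = 1))"
    have K0: "card {h\<in>?hs. (\<forall>e\<in>w. ss h e) \<and> (\<forall>v\<in>V. sgn (h v) = \<sigma> v)} = (if cond then 1 else 0)"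
      using count_sigma[OF G PH SV Fw wE sig] unfolding cond_def .
    have K: "real (card {h\<in>?hs. (\<forall>e\<in>w. ss h e) \<and> (\<forall>v\<in>V. sgn (h v) = \<sigma> v)}) = (if cond then 1 else 0)"
      unfolding K0 by (cases cond) simp_all
    have Nw: "N w = 2 ^ card {C\<in>components V w. C \<inter> S = {}}"
      using count_N[OF G PH SV Fw wE] unfolding N_def by simp
    have num: "hprob V E c H S (\<lambda>(h,B). omega E h B = w \<and> (\<forall>v\<in>V. sgn (h v) = \<sigma> v))
        = ?A * (GG E c H w * (if cond then 1 else 0)) / (?A * Y)"
      using hprob_omega[OF G PH c wE, of S "\<lambda>h. \<forall>v\<in>V. sgn (h v) = \<sigma> v"] K
      unfolding Y_def N_def by (simp add: sum_distrib_left mult.assoc)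
    have "hprob V E c H S (\<lambda>(h,B). omega E h B = w \<and> (\<forall>v\<in>V. sgn (h v) = \<sigma> v))
              / hprob V E c H S (\<lambda>(h,B). omega E h B = w)
        = (?A * (GG E c H w * (if cond then 1 else 0)) / (?A * Y)) / (?A * (GG E c H w * N w) / (?A * Y))"
      unfolding num hp[OF wE] ..
    also have "\<dots> = (if cond then 1 else 0) / N w" using Apos GGw Y0 by (simp add: field_simps)
    also have "\<dots> = (if cond then 1 / 2 ^ card {C\<in>components V w. C \<inter> S = {}} else 0)"
      unfolding Nw by simp
    finally show ?thesis unfolding cond_def .
  qed
  show ?thesis using part1 part2 by blast
qed

end
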